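(* Let $q$ be a prime power, $s,\ell$ positive integers, $\alpha,\beta\in\{1,-1\}\subseteq\mathbb{F}_q$, let $r$ be the multiplicative order of $\beta$ (so $r=1$ if $\beta=1$, $r=2$ if $\beta=-1\neq 1$), and assume $q\equiv 1\pmod{r\ell}$. Let $\omega\in\mathbb{F}_q$ be a primitive $r\ell$-th root of unity with $\omega^\ell=\beta$, and $\eta_k(y)=\prod_{j\ne k,\,0\le j\le \ell-1}\frac{y-\omega^{1+jr}}{\omega^{1+kr}-\omega^{1+jr}}$ for $0\le k\le\ell-1$. Let $\mathcal{C}$ be an ideal of $\mathcal{R}=\mathbb{F}_q[x,y]/\langle x^s-\alpha,y^\ell-\beta\rangle$; for $j=0,\dots,\ell-1$ let $p_j(x)$ be the monic divisor of $x^s-\alpha$ generating $I_j=\{f(x)\in\mathbb{F}_q[x]/\langle x^s-\alpha\rangle:\eta_j(y)f(x)\in\mathcal{C}\}$, $a_j=\deg p_j(x)$, and $p_j'(x)\in\mathbb{F}_q[x]$ with $p_j(x)p_j'(x)=x^s-\alpha$. Then the dual code satisfies $$\mathcal{C}^\perp=\big\langle p_0'^*(x)\eta_0^*(y),\ p_1'^*(x)\eta_1^*(y),\ \dots,\ p_{\ell-1}'^*(x)\eta_{\ell-1}^*(y)\big\rangle,$$ and the elements $x^i p_j'^*(x)\eta_j^*(y)$, $0\le j\le \ell-1$, $0\le i\le a_j-1$, form a basis of $\mathcal{C}^\perp$ over $\mathbb{F}_q$ (i.e. the matrix with these rows is a generator matrix of $\mathcal{C}^\perp$).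
   Context: An element $\sum_{i,j}c_{i,j}x^iy^j$ of $\mathcal{R}$ ($0\le i\le s-1$, $0\le j\le\ell-1$) is identified with the vector $(c_{i,j})$ of length $s\ell$; ideals of $\mathcal{R}$ are two-dimensional $(\alpha,\beta)$-constacyclic codes. $\mathcal{C}^\perp$ is the dual with respect to the Euclidean inner product $\sum_{i,j}c_{i,j}d_{i,j}$; for $\alpha,\beta\in\{\pm1\}$ it is again an ideal of $\mathcal{R}$. For a nonzero polynomial $f$ of degree $k$, its reciprocal is $f^*(x)=x^kf(1/x)$ (so $\eta_j^*(y)=y^{\ell-1}\eta_j(1/y)$). *)

theory Defs
  imports "HOL-Computational_Algebra.Polynomial"
begin

text \<open>Elements of R = F[x,y]/<x^s - alpha, y^l - beta> are represented by their
coefficient arrays c i j (coefficient of x^i y^j), with i < s, j < l, and zero outside.\<close>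

definition R_carrier :: "nat \<Rightarrow> nat \<Rightarrow> (nat \<Rightarrow> nat \<Rightarrow> 'a::field) set" where
  "R_carrier s l = {c. \<forall>i j. (s \<le> i \<or> l \<le> j) \<longrightarrow> c i j = 0}"

definition R_add :: "(nat \<Rightarrow> nat \<Rightarrow> 'a::field) \<Rightarrow> (nat \<Rightarrow> nat \<Rightarrow> 'a) \<Rightarrow> nat \<Rightarrow> nat \<Rightarrow> 'a" where
  "R_add c d = (\<lambda>i j. c i j + d i j)"

definition R_zero :: "nat \<Rightarrow> nat \<Rightarrow> 'a::field" where
  "R_zero = (\<lambda>i j. 0)"

definition R_smult :: "'a::field \<Rightarrow> (nat \<Rightarrow> nat \<Rightarrow> 'a) \<Rightarrow> nat \<Rightarrow> nat \<Rightarrow> 'a" where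
  "R_smult a c = (\<lambda>i j. a * c i j)"

text \<open>Multiplication in R, using x^s = alpha and y^l = beta.\<close>
definition R_mul :: "nat \<Rightarrow> nat \<Rightarrow> 'a::field \<Rightarrow> 'a \<Rightarrow>
    (nat \<Rightarrow> nat \<Rightarrow> 'a) \<Rightarrow> (nat \<Rightarrow> nat \<Rightarrow> 'a) \<Rightarrow> nat \<Rightarrow> nat \<Rightarrow> 'a" where
  "R_mul s l \<alpha> \<beta> c d = (\<lambda>i j. if i < s \<and> j < l then
      (\<Sum>a<s. \<Sum>b<l. \<Sum>a'<s. \<Sum>b'<l.
         if (a + a') mod s = i \<and> (b + b') mod l = j
         then \<alpha> ^ ((a + a') div s) * \<beta> ^ ((b + b') div l) * c a b * d a' b' else 0)
    else 0)"

text \<open>Image in R of the product f(x) g(y) of univariate polynomials.\<close>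
definition R_emb :: "nat \<Rightarrow> nat \<Rightarrow> 'a::field \<Rightarrow> 'a \<Rightarrow> 'a poly \<Rightarrow> 'a poly \<Rightarrow> nat \<Rightarrow> nat \<Rightarrow> 'a" where
  "R_emb s l \<alpha> \<beta> f g = (\<lambda>i j. if i < s \<and> j < l then
      (\<Sum>a\<le>degree f. \<Sum>b\<le>degree g.
         if a mod s = i \<and> b mod l = j
         then \<alpha> ^ (a div s) * \<beta> ^ (b div l) * coeff f a * coeff g b else 0)
    else 0)"

definition R_ideal :: "nat \<Rightarrow> nat \<Rightarrow> 'a::field \<Rightarrow> 'a \<Rightarrow> (nat \<Rightarrow> nat \<Rightarrow> 'a) set \<Rightarrow> bool" where
  "R_ideal s l \<alpha> \<beta> I \<longleftrightarrow> I \<subseteq> R_carrier s l \<and> R_zero \<in> I \<and>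
     (\<forall>c\<in>I. \<forall>d\<in>I. R_add c d \<in> I) \<and>
     (\<forall>c\<in>I. \<forall>r\<in>R_carrier s l. R_mul s l \<alpha> \<beta> r c \<in> I)"

definition R_gen_ideal :: "nat \<Rightarrow> nat \<Rightarrow> 'a::field \<Rightarrow> 'a \<Rightarrow> (nat \<Rightarrow> nat \<Rightarrow> 'a) set \<Rightarrow> (nat \<Rightarrow> nat \<Rightarrow> 'a) set" where
  "R_gen_ideal s l \<alpha> \<beta> G = \<Inter>{I. R_ideal s l \<alpha> \<beta> I \<and> G \<subseteq> I}"

definition R_dual :: "nat \<Rightarrow> nat \<Rightarrow> (nat \<Rightarrow> nat \<Rightarrow> 'a::field) set \<Rightarrow> (nat \<Rightarrow> nat \<Rightarrow> 'a) set" where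
  "R_dual s l C = {d \<in> R_carrier s l. \<forall>c\<in>C. (\<Sum>i<s. \<Sum>j<l. c i j * d i j) = 0}"

definition lin_comb :: "'i set \<Rightarrow> ('i \<Rightarrow> 'a::field) \<Rightarrow> ('i \<Rightarrow> nat \<Rightarrow> nat \<Rightarrow> 'a) \<Rightarrow> nat \<Rightarrow> nat \<Rightarrow> 'a" where
  "lin_comb A u B = (\<lambda>i j. \<Sum>k\<in>A. u k * B k i j)"

definition fam_span :: "'i set \<Rightarrow> ('i \<Rightarrow> nat \<Rightarrow> nat \<Rightarrow> 'a::field) \<Rightarrow> (nat \<Rightarrow> nat \<Rightarrow> 'a) set" where
  "fam_span A B = {lin_comb A u B | u. True}"

definition fam_indep :: "'i set \<Rightarrow> ('i \<Rightarrow> nat \<Rightarrow> nat \<Rightarrow> 'a::field) \<Rightarrow> bool" where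
  "fam_indep A B \<longleftrightarrow> (\<forall>u. lin_comb A u B = R_zero \<longrightarrow> (\<forall>k\<in>A. u k = 0))"

definition mult_order :: "'a::field \<Rightarrow> nat" where
  "mult_order b = (LEAST n. 0 < n \<and> b ^ n = 1)"

definition primitive_root :: "nat \<Rightarrow> 'a::field \<Rightarrow> bool" where
  "primitive_root n w \<longleftrightarrow> w ^ n = 1 \<and> (\<forall>k. 0 < k \<and> k < n \<longrightarrow> w ^ k \<noteq> 1)"

definition eta :: "nat \<Rightarrow> nat \<Rightarrow> 'a::field \<Rightarrow> nat \<Rightarrow> 'a poly" where
  "eta l r w k = (\<Prod>j\<in>{0..<l} - {k}.
      smult (inverse (w ^ (1 + k * r) - w ^ (1 + j * r))) [:- (w ^ (1 + j * r)), 1:])"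

end

theory Submission
  imports Defs
begin

definition ev :: "nat \<Rightarrow> nat \<Rightarrow> (nat \<Rightarrow> nat \<Rightarrow> 'a::field) \<Rightarrow> 'a \<Rightarrow> 'a poly" where
  "ev s l c v = (\<Sum>i<s. monom (\<Sum>j<l. c i j * v ^ j) i)"

lemma coeff_ev: "coeff (ev s l c v) n = (if n < s then (\<Sum>j<l. c n j * v ^ j) else 0)"
  unfolding ev_def by (simp add: coeff_sum coeff_monom)

lemma degree_ev: "0 < s \<Longrightarrow> degree (ev s l c v) < s"
proof -
  assume s: "0 < s"
  have "degree (ev s l c v) \<le> s - 1"
    by (rule degree_le) (auto simp: coeff_ev)
  thus ?thesis using s by linarith
qed

lemma degree_X: "0 < s \<Longrightarrow> degree (monom (1::'a::field) s - [:\<alpha>:]) = s"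
proof -
  assume s: "0 < s"
  have "degree (monom (1::'a) s - [:\<alpha>:]) \<le> s"
    by (rule degree_le) (auto simp: coeff_monom coeff_pCons split: nat.split)
  moreover have "coeff (monom (1::'a) s - [:\<alpha>:]) s \<noteq> 0" using s by (cases s) (simp_all add: coeff_monom)
  ultimately show ?thesis by (metis le_degree le_antisym)
qed

lemma X_nz: "0 < s \<Longrightarrow> monom (1::'a::field) s - [:\<alpha>:] \<noteq> 0"
  using degree_X[of s \<alpha>] by auto

lemma monomX_aux: "(monom (1::'a::field) s - [:\<alpha>:]) dvd (monom c (m + s * q) - monom (\<alpha> ^ q * c) m)"
proof (induction q)
  case 0
  then show ?case by simp
next
  case (Suc q)
  have e: "monom c (m + s * Suc q) - monom (\<alpha> ^ Suc q * c) m
     = (monom c (m + s * q) - monom (\<alpha> ^ q * c) m) * monom 1 s + monom (\<alpha> ^ q * c) m * (monom 1 s - [:\<alpha>:])"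
    by (simp add: algebra_simps mult_monom ac_simps smult_monom)
  show ?case unfolding e using Suc by (intro dvd_add dvd_mult2 dvd_mult) auto
qed

lemma monomX: "(monom (1::'a::field) s - [:\<alpha>:]) dvd (monom c n - monom (\<alpha> ^ (n div s) * c) (n mod s))"
  using monomX_aux[of s \<alpha> c "n mod s" "n div s"] by (simp add: add.commute)

lemma mod_unique_X:
  fixes X :: "'a::field poly"
  assumes "degree E < degree X" "X dvd (P - E)"
  shows "P mod X = E"
proof -
  obtain k where k: "P - E = X * k" using assms(2) by (auto elim: dvdE)
  have "P = E + X * k" using k by (simp add: algebra_simps)
  hence "P mod X = E mod X" by simp
  also have "\<dots> = E" using assms(1) by (rule mod_poly_less)
  finally show ?thesis .
qed

lemma monom_if0: "monom ((if P then C else 0) * (w::'a::field)) i = (if P then monom (C * w) i else 0)"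
  by simp
lemma if_conj0: "(if A \<and> B then X else (0::'b::zero)) = (if B then if A then X else 0 else 0)"
  by simp
lemma red_inner:
  assumes "a mod s < s" "b mod l < l"
  shows "(\<Sum>i<s. \<Sum>j<l. monom ((if a mod s = i \<and> b mod l = j then C else 0) * (v::'a::field) ^ j) i)
       = monom (C * v ^ (b mod l)) (a mod s)"
  using assms by (simp only: monom_if0 if_conj0) (simp add: sum.delta')

lemma sum_swap3: "(\<Sum>i\<in>I. \<Sum>j\<in>J. \<Sum>z\<in>A. f i j z) = (\<Sum>z\<in>A. \<Sum>i\<in>I. \<Sum>j\<in>J. f i j z)"
proof -
  have "(\<Sum>i\<in>I. \<Sum>j\<in>J. \<Sum>z\<in>A. f i j z) = (\<Sum>i\<in>I. \<Sum>z\<in>A. \<Sum>j\<in>J. f i j z)"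
    by (rule sum.cong[OF refl], rule sum.swap)
  also have "\<dots> = (\<Sum>z\<in>A. \<Sum>i\<in>I. \<Sum>j\<in>J. f i j z)" by (rule sum.swap)
  finally show ?thesis .
qed

lemma ev_red:
  fixes K :: "'z \<Rightarrow> 'a::field"
  assumes A: "finite A" and s: "0 < s" and l: "0 < l" and v: "v ^ l = \<beta>"
    and M: "\<And>i j. i < s \<Longrightarrow> j < l \<Longrightarrow> M i j = (\<Sum>z\<in>A. if ea z mod s = i \<and> eb z mod l = j
               then \<alpha> ^ (ea z div s) * \<beta> ^ (eb z div l) * K z else 0)"
  shows "ev s l M v = (\<Sum>z\<in>A. monom (K z * v ^ (eb z)) (ea z)) mod (monom 1 s - [:\<alpha>:])"
proof -
  have vp: "v ^ eb z = \<beta> ^ (eb z div l) * v ^ (eb z mod l)" for z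
  proof -
    have g: "v ^ (l * q + m) = \<beta> ^ q * v ^ m" for q m by (simp add: power_add power_mult v)
    show ?thesis using g[of "eb z div l" "eb z mod l"] by simp
  qed
  have "ev s l M v = (\<Sum>i<s. \<Sum>j<l. \<Sum>z\<in>A. monom ((if ea z mod s = i \<and> eb z mod l = j
               then \<alpha> ^ (ea z div s) * \<beta> ^ (eb z div l) * K z else 0) * v ^ j) i)"
    unfolding ev_def by (intro sum.cong refl) (simp add: M monom_sum sum_distrib_right)
  also have "\<dots> = (\<Sum>z\<in>A. \<Sum>i<s. \<Sum>j<l. monom ((if ea z mod s = i \<and> eb z mod l = j
               then \<alpha> ^ (ea z div s) * \<beta> ^ (eb z div l) * K z else 0) * v ^ j) i)"
    by (rule sum_swap3)
  also have "\<dots> = (\<Sum>z\<in>A. monom (\<alpha> ^ (ea z div s) * (K z * v ^ eb z)) (ea z mod s))"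
    using s l by (intro sum.cong refl, subst red_inner) (auto simp: vp ac_simps)
  finally have e1: "ev s l M v = \<dots>" .
  have "(monom 1 s - [:\<alpha>:]) dvd ((\<Sum>z\<in>A. monom (K z * v ^ (eb z)) (ea z)) - ev s l M v)"
    unfolding e1 sum_subtractf[symmetric] by (intro dvd_sum monomX)
  then show ?thesis using degree_ev[OF s, of l M v] degree_X[OF s, of \<alpha>]
    by (intro mod_unique_X[symmetric]) auto
qed


lemma smult_sum_right: "smult c (\<Sum>x\<in>A. f x) = (\<Sum>x\<in>A. smult c (f x))"
  by (induct A rule: infinite_finite_induct) (auto simp: smult_add_right)

lemma ev_emb:
  assumes s: "0 < s" and l: "0 < l" and v: "v ^ l = \<beta>"
  shows "ev s l (R_emb s l \<alpha> \<beta> f g) v = (f * [:poly g v:]) mod (monom 1 s - [:\<alpha>:])"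
proof -
  have "ev s l (R_emb s l \<alpha> \<beta> f g) v
     = (\<Sum>z\<in>{..degree f}\<times>{..degree g}. monom ((coeff f (fst z) * coeff g (snd z)) * v ^ (snd z)) (fst z)) mod (monom 1 s - [:\<alpha>:])"
    by (rule ev_red[OF _ s l v]) (auto simp: R_emb_def sum.cartesian_product ac_simps intro!: sum.cong)
  also have "(\<Sum>z\<in>{..degree f}\<times>{..degree g}. monom ((coeff f (fst z) * coeff g (snd z)) * v ^ (snd z)) (fst z))
      = f * [:poly g v:]"
  proof -
    have "f * [:poly g v:] = smult (poly g v) f" by simp
    also have "\<dots> = smult (\<Sum>b\<le>degree g. coeff g b * v ^ b) (\<Sum>a\<le>degree f. monom (coeff f a) a)"
      by (simp add: poly_altdef poly_as_sum_of_monoms)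
    also have "\<dots> = (\<Sum>a\<le>degree f. \<Sum>b\<le>degree g. monom (coeff f a * coeff g b * v ^ b) a)"
      by (simp add: smult_sum smult_sum_right smult_monom sum_distrib_left monom_sum ac_simps)
    also have "\<dots> = (\<Sum>z\<in>{..degree f}\<times>{..degree g}. monom ((coeff f (fst z) * coeff g (snd z)) * v ^ (snd z)) (fst z))"
      by (simp add: sum.cartesian_product case_prod_beta)
    finally show ?thesis by simp
  qed
  finally show ?thesis .
qed

lemma ev_mul:
  assumes s: "0 < s" and l: "0 < l" and v: "v ^ l = \<beta>"
  shows "ev s l (R_mul s l \<alpha> \<beta> c d) v = (ev s l c v * ev s l d v) mod (monom 1 s - [:\<alpha>:])"
proof -
  let ?A = "{..<s}\<times>{..<l}\<times>{..<s}\<times>{..<l}"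
  have "ev s l (R_mul s l \<alpha> \<beta> c d) v
     = (\<Sum>z\<in>?A. monom ((case z of (a,b,a',b') \<Rightarrow> c a b * d a' b') * v ^ (case z of (a,b,a',b') \<Rightarrow> b + b'))
           (case z of (a,b,a',b') \<Rightarrow> a + a')) mod (monom 1 s - [:\<alpha>:])"
    by (rule ev_red[OF _ s l v]) (auto simp: R_mul_def sum.cartesian_product ac_simps intro!: sum.cong)
  also have "(\<Sum>z\<in>?A. monom ((case z of (a,b,a',b') \<Rightarrow> c a b * d a' b') * v ^ (case z of (a,b,a',b') \<Rightarrow> b + b'))
           (case z of (a,b,a',b') \<Rightarrow> a + a')) = ev s l c v * ev s l d v"
  proof -
    have e: "ev s l c v = (\<Sum>a<s. \<Sum>b<l. monom (c a b * v ^ b) a)" for c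
      unfolding ev_def by (simp add: monom_sum)
    have "ev s l c v * ev s l d v = (\<Sum>a<s. \<Sum>b<l. \<Sum>a'<s. \<Sum>b'<l. monom (c a b * d a' b' * v ^ (b + b')) (a + a'))"
    proof -
      have "ev s l c v * ev s l d v = (\<Sum>a<s. \<Sum>b<l. monom (c a b * v ^ b) a * (\<Sum>a'<s. \<Sum>b'<l. monom (d a' b' * v ^ b') a'))"
        by (simp only: e sum_distrib_right)
      also have "\<dots> = (\<Sum>a<s. \<Sum>b<l. \<Sum>a'<s. \<Sum>b'<l. monom (c a b * v ^ b) a * monom (d a' b' * v ^ b') a')"
        by (simp only: sum_distrib_left)
      also have "\<dots> = (\<Sum>a<s. \<Sum>b<l. \<Sum>a'<s. \<Sum>b'<l. monom (c a b * d a' b' * v ^ (b + b')) (a + a'))"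
        by (simp add: mult_monom power_add ac_simps)
      finally show ?thesis .
    qed
    also have "\<dots> = (\<Sum>z\<in>?A. monom ((case z of (a,b,a',b') \<Rightarrow> c a b * d a' b') * v ^ (case z of (a,b,a',b') \<Rightarrow> b + b'))
           (case z of (a,b,a',b') \<Rightarrow> a + a'))"
      by (simp add: sum.cartesian_product case_prod_beta)
    finally show ?thesis by simp
  qed
  finally show ?thesis .
qed


lemma ev_add: "ev s l (R_add c d) v = ev s l c v + ev s l d v"
  by (rule poly_eqI) (simp add: coeff_ev R_add_def algebra_simps sum.distrib)

lemma ev_smult: "ev s l (R_smult a c) v = smult a (ev s l c v)"
  by (rule poly_eqI) (simp add: coeff_ev R_smult_def sum_distrib_left ac_simps)

lemma ev_zero: "ev s l R_zero v = 0"
  by (rule poly_eqI) (simp add: coeff_ev R_zero_def)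

lemma ev_lin_comb: "ev s l (lin_comb A u B) v = (\<Sum>k\<in>A. smult (u k) (ev s l (B k) v))"
  by (rule poly_eqI) (auto simp: coeff_ev lin_comb_def coeff_sum sum_distrib_left sum_distrib_right ac_simps
      intro: sum.swap)

definition O2 :: "nat \<Rightarrow> (nat \<Rightarrow> 'a::field) \<Rightarrow> (nat \<Rightarrow> 'a) \<Rightarrow> 'a \<Rightarrow> bool" where
  "O2 l \<sigma> \<tau> L \<longleftrightarrow> (\<forall>a<l. \<forall>b<l. (\<Sum>m<l. \<sigma> m ^ a * \<tau> m ^ b) = (if a = b then L else 0))"

lemma INV:
  assumes c: "c \<in> R_carrier s l" and o: "O2 l \<sigma> \<tau> L" and j: "j < l"
  shows "(\<Sum>m<l. coeff (ev s l c (\<sigma> m)) i * \<tau> m ^ j) = L * c i j"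
proof (cases "i < s")
  case True
  have "(\<Sum>m<l. coeff (ev s l c (\<sigma> m)) i * \<tau> m ^ j) = (\<Sum>m<l. \<Sum>j'<l. c i j' * (\<sigma> m ^ j' * \<tau> m ^ j))"
    using True by (simp add: coeff_ev sum_distrib_right sum_distrib_left ac_simps)
  also have "\<dots> = (\<Sum>j'<l. c i j' * (\<Sum>m<l. \<sigma> m ^ j' * \<tau> m ^ j))"
    by (subst sum.swap) (simp add: sum_distrib_left)
  also have "\<dots> = (\<Sum>j'<l. c i j' * (if j' = j then L else 0))"
    using o j unfolding O2_def by (intro sum.cong refl) auto
  also have "\<dots> = L * c i j" using j by (simp add: if_distrib sum.delta cong: if_cong)
  finally show ?thesis .
next
  case False
  then show ?thesis using c by (simp add: coeff_ev R_carrier_def)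
qed

lemma INJ:
  assumes c: "c \<in> R_carrier s l" and d: "d \<in> R_carrier s l" and o: "O2 l \<sigma> \<tau> L" and L: "L \<noteq> 0"
    and e: "\<And>m. m < l \<Longrightarrow> ev s l c (\<sigma> m) = ev s l d (\<sigma> m)"
  shows "c = d"
proof (intro ext)
  fix i j
  show "c i j = d i j"
  proof (cases "j < l")
    case True
    have "(\<Sum>m<l. coeff (ev s l c (\<sigma> m)) i * \<tau> m ^ j) = (\<Sum>m<l. coeff (ev s l d (\<sigma> m)) i * \<tau> m ^ j)"
      by (intro sum.cong) (auto simp: e)
    hence "L * c i j = L * d i j"
      using INV[OF c o True, of i] INV[OF d o True, of i] by simp
    thus ?thesis using L by simp
  next
    case False
    then show ?thesis using c d by (simp add: R_carrier_def)
  qed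
qed

lemma INNER:
  assumes c: "c \<in> R_carrier s l" and d: "d \<in> R_carrier s l" and o: "O2 l \<sigma> \<tau> L" and L: "L \<noteq> 0"
  shows "(\<Sum>i<s. \<Sum>j<l. c i j * d i j)
    = inverse L * (\<Sum>m<l. \<Sum>i<s. coeff (ev s l c (\<sigma> m)) i * coeff (ev s l d (\<tau> m)) i)"
proof -
  have "(\<Sum>m<l. \<Sum>i<s. coeff (ev s l c (\<sigma> m)) i * coeff (ev s l d (\<tau> m)) i)
     = (\<Sum>i<s. \<Sum>j<l. d i j * (\<Sum>m<l. coeff (ev s l c (\<sigma> m)) i * \<tau> m ^ j))"
  proof -
    have "(\<Sum>m<l. \<Sum>i<s. coeff (ev s l c (\<sigma> m)) i * coeff (ev s l d (\<tau> m)) i)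
       = (\<Sum>m<l. \<Sum>i<s. \<Sum>j<l. d i j * (coeff (ev s l c (\<sigma> m)) i * \<tau> m ^ j))"
      by (intro sum.cong refl) (simp add: coeff_ev sum_distrib_left ac_simps)
    also have "\<dots> = (\<Sum>i<s. \<Sum>m<l. \<Sum>j<l. d i j * (coeff (ev s l c (\<sigma> m)) i * \<tau> m ^ j))"
      by (rule sum.swap)
    also have "\<dots> = (\<Sum>i<s. \<Sum>j<l. \<Sum>m<l. d i j * (coeff (ev s l c (\<sigma> m)) i * \<tau> m ^ j))"
      by (intro sum.cong refl sum.swap)
    also have "\<dots> = (\<Sum>i<s. \<Sum>j<l. d i j * (\<Sum>m<l. coeff (ev s l c (\<sigma> m)) i * \<tau> m ^ j))"
      by (simp add: sum_distrib_left)
    finally show ?thesis .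
  qed
  also have "\<dots> = (\<Sum>i<s. \<Sum>j<l. L * (c i j * d i j))"
    using INV[OF c o] by (intro sum.cong refl) (simp add: ac_simps)
  finally show ?thesis using L by (simp add: sum_distrib_left[symmetric])
qed


lemma of_nat_card_0: "of_nat (card (UNIV::'a::{finite,ring_1} set)) = (0::'a)"
proof -
  have e1: "(\<Sum>y\<in>(UNIV::'a set). y + 1) = (\<Sum>y\<in>UNIV. y)"
    by (rule sum.reindex_bij_witness[of _ "\<lambda>y. y - 1" "\<lambda>y. y + 1"]) auto
  have e2: "(\<Sum>y\<in>(UNIV::'a set). y + 1) = (\<Sum>y\<in>UNIV. y) + (\<Sum>y\<in>(UNIV::'a set). 1)"
    by (rule sum.distrib)
  have e3: "(\<Sum>y\<in>(UNIV::'a set). (1::'a)) = of_nat (card (UNIV::'a set))" by simp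
  show ?thesis using e1 e2 e3 by simp
qed

lemma sq1: "(x::'a::field) \<in> {1, -1} \<Longrightarrow> x * x = 1"
proof -
  assume "x \<in> {1, -1}"
  hence "x = 1 \<or> x = -1" by simp
  thus ?thesis by (elim disjE) simp_all
qed

lemma mult_order_pos: "(x::'a::field) \<in> {1, -1} \<Longrightarrow> 0 < mult_order x"
proof -
  assume "x \<in> {1, -1}"
  hence "x ^ 2 = 1" using sq1 by (simp add: power2_eq_square)
  hence ex: "\<exists>n. 0 < n \<and> x ^ n = 1" by (intro exI[of _ 2]) simp
  have "0 < (LEAST n. 0 < n \<and> x ^ n = 1) \<and> x ^ (LEAST n. 0 < n \<and> x ^ n = 1) = 1"
    using LeastI_ex[OF ex] by blast
  thus ?thesis unfolding mult_order_def by simp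
qed

lemma geo0: "(z::'a::field) \<noteq> 1 \<Longrightarrow> z ^ l = 1 \<Longrightarrow> (\<Sum>m<l. z ^ m) = 0"
  by (simp add: geometric_sum)

context
  fixes l r :: nat and \<omega> \<beta> :: "'a::field"
  assumes l: "0 < l" and r: "0 < r" and prim: "primitive_root (r * l) \<omega>" and wl: "\<omega> ^ l = \<beta>"
begin

lemma w_nz: "\<omega> \<noteq> 0"
  using prim l r unfolding primitive_root_def by (auto simp: zero_power)

lemma wrl: "\<omega> ^ (r * l) = 1" using prim unfolding primitive_root_def by simp

lemma rho_pow: "(\<omega> ^ (1 + k * r)) ^ l = \<beta>"
proof -
  have "(\<omega> ^ (1 + k * r)) ^ l = \<omega> ^ l * (\<omega> ^ (r * l)) ^ k"
    by (simp add: power_add power_mult[symmetric] ac_simps power_mult_distrib)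
  thus ?thesis using wrl wl by simp
qed

lemma z_ne1: "0 < d \<Longrightarrow> d < l \<Longrightarrow> \<omega> ^ (r * d) \<noteq> 1"
proof -
  assume d: "0 < d" "d < l"
  have "0 < r * d" using d r by simp
  moreover have "r * d < r * l" using d r by simp
  ultimately show ?thesis using prim unfolding primitive_root_def by blast
qed

lemma z_pow: "(\<omega> ^ (r * d)) ^ l = 1"
proof -
  have "(\<omega> ^ (r * d)) ^ l = (\<omega> ^ (r * l)) ^ d" by (simp add: power_mult[symmetric] ac_simps)
  thus ?thesis using wrl by simp
qed

lemma rho_inj: "k < l \<Longrightarrow> m < l \<Longrightarrow> \<omega> ^ (1 + k * r) = \<omega> ^ (1 + m * r) \<Longrightarrow> k = m"
proof (rule ccontr)
  assume k: "k < l" and m: "m < l" and e: "\<omega> ^ (1 + k * r) = \<omega> ^ (1 + m * r)" and ne: "k \<noteq> m"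
  have g: "\<omega> ^ (r * (b - a)) = 1" if "a < b" "\<omega> ^ (1 + a * r) = \<omega> ^ (1 + b * r)" for a b
  proof -
    have "1 + b * r = (1 + a * r) + r * (b - a)" using that(1) by (simp add: algebra_simps diff_mult_distrib2)
    hence "\<omega> ^ (1 + b * r) = \<omega> ^ (1 + a * r) * \<omega> ^ (r * (b - a))" by (simp add: power_add)
    thus ?thesis using that(2) w_nz by simp
  qed
  show False
  proof (cases "k < m")
    case True
    have "\<omega> ^ (r * (m - k)) \<noteq> 1" using True m by (intro z_ne1) auto
    then show ?thesis using g[OF True e] by blast
  next
    case False
    then have "m < k" using ne by simp
    have "\<omega> ^ (r * (k - m)) \<noteq> 1" using \<open>m < k\<close> k by (intro z_ne1) auto
    then show ?thesis using g[OF \<open>m < k\<close> e[symmetric]] by blast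
  qed
qed

lemma O2_rho:
  "O2 l (\<lambda>m. \<omega> ^ (1 + m * r)) (\<lambda>m. inverse (\<omega> ^ (1 + m * r))) (of_nat l)"
  unfolding O2_def
proof (intro allI impI)
  fix a b assume a: "a < l" and b: "b < l"
  define \<rho> where "\<rho> m = \<omega> ^ (1 + m * r)" for m
  have rnz: "\<rho> m \<noteq> 0" for m using w_nz by (simp add: \<rho>_def)
  have rp: "\<rho> m ^ d = \<omega> ^ d * (\<omega> ^ (r * d)) ^ m" for m d
    by (simp add: \<rho>_def power_add power_mult[symmetric] power_mult_distrib ac_simps)
  show "(\<Sum>m<l. (\<omega> ^ (1 + m * r)) ^ a * inverse (\<omega> ^ (1 + m * r)) ^ b) = (if a = b then of_nat l else 0)"
  proof (cases "a = b")
    case True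
    have "(\<Sum>m<l. \<rho> m ^ a * inverse (\<rho> m) ^ b) = (\<Sum>m<l. 1)"
      using True rnz by (intro sum.cong refl) (simp add: power_inverse)
    then have "(\<Sum>m<l. \<rho> m ^ a * inverse (\<rho> m) ^ b) = (if a = b then of_nat l else 0)" using True by simp
    then show ?thesis unfolding \<rho>_def .
  next
    case False
    show ?thesis
    proof (cases "b < a")
      case True
      have "(\<Sum>m<l. \<rho> m ^ a * inverse (\<rho> m) ^ b) = (\<Sum>m<l. \<omega> ^ (a - b) * (\<omega> ^ (r * (a - b))) ^ m)"
      proof (intro sum.cong refl)
        fix m
        have "\<rho> m ^ a = \<rho> m ^ (a - b) * \<rho> m ^ b" using True by (simp add: power_add[symmetric])
        hence "\<rho> m ^ a * inverse (\<rho> m) ^ b = \<rho> m ^ (a - b)"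
          using rnz[of m] by (simp add: power_inverse)
        thus "\<rho> m ^ a * inverse (\<rho> m) ^ b = \<omega> ^ (a - b) * (\<omega> ^ (r * (a - b))) ^ m"
          by (simp only: rp)
      qed
      also have "\<dots> = 0"
      proof -
        have z1: "\<omega> ^ (r * (a - b)) \<noteq> 1" using True a z_ne1[of "a - b"] by simp
        show ?thesis by (simp only: sum_distrib_left[symmetric] geo0[OF z1 z_pow]) simp
      qed
      finally have "(\<Sum>m<l. \<rho> m ^ a * inverse (\<rho> m) ^ b) = (if a = b then of_nat l else 0)" using False by simp
      then show ?thesis unfolding \<rho>_def .
    next
      case False2: False
      hence ab: "a < b" using False by simp
      have "(\<Sum>m<l. \<rho> m ^ a * inverse (\<rho> m) ^ b) = (\<Sum>m<l. inverse (\<omega> ^ (b - a)) * (inverse (\<omega> ^ (r * (b - a)))) ^ m)"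
      proof (intro sum.cong refl)
        fix m
        have "inverse (\<rho> m) ^ b = inverse (\<rho> m) ^ (b - a) * inverse (\<rho> m) ^ a" using ab by (simp add: power_add[symmetric])
        hence "\<rho> m ^ a * inverse (\<rho> m) ^ b = inverse (\<rho> m ^ (b - a))"
          using rnz[of m] by (simp add: power_inverse)
        thus "\<rho> m ^ a * inverse (\<rho> m) ^ b = inverse (\<omega> ^ (b - a)) * (inverse (\<omega> ^ (r * (b - a)))) ^ m"
          by (simp add: rp power_inverse)
      qed
      also have "\<dots> = 0"
      proof -
        have z1: "inverse (\<omega> ^ (r * (b - a))) \<noteq> 1" using ab b z_ne1[of "b - a"] by simp
        have z2: "(inverse (\<omega> ^ (r * (b - a)))) ^ l = 1" using z_pow[of "b - a"] by (simp only: power_inverse) simp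
        show ?thesis by (simp only: sum_distrib_left[symmetric] geo0[OF z1 z2]) simp
      qed
      finally have "(\<Sum>m<l. \<rho> m ^ a * inverse (\<rho> m) ^ b) = (if a = b then of_nat l else 0)" using False by simp
      then show ?thesis unfolding \<rho>_def .
    qed
  qed
qed

lemma O2_swap: "O2 l \<sigma> \<tau> L \<Longrightarrow> O2 l \<tau> \<sigma> L"
proof -
  assume o: "O2 l \<sigma> \<tau> L"
  show ?thesis unfolding O2_def
  proof (intro allI impI)
    fix a b assume a: "a < l" and b: "b < l"
    have "(\<Sum>m<l. \<tau> m ^ a * \<sigma> m ^ b) = (\<Sum>m<l. \<sigma> m ^ b * \<tau> m ^ a)" by (simp only: mult.commute)
    also have "\<dots> = (if b = a then L else 0)" using o a b unfolding O2_def by blast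
    finally show "(\<Sum>m<l. \<tau> m ^ a * \<sigma> m ^ b) = (if a = b then L else 0)" by auto
  qed
qed

lemma pl: "poly (smult c [:- y, 1:]) x = c * (x - (y::'b::comm_ring_1))"
  by (simp add: algebra_simps)

lemma eta_eval:
  assumes k: "k < l" and m: "m < l"
  shows "poly (eta l r \<omega> k) (\<omega> ^ (1 + m * r)) = (if k = m then 1 else 0)"
proof (cases "k = m")
  case True
  have "poly (eta l r \<omega> k) (\<omega> ^ (1 + m * r)) = (\<Prod>j\<in>{0..<l} - {k}. 1)"
    unfolding eta_def poly_prod
  proof (intro prod.cong refl)
    fix j assume j: "j \<in> {0..<l} - {k}"
    hence "\<omega> ^ (1 + k * r) - \<omega> ^ (1 + j * r) \<noteq> 0" using rho_inj[of k j] k by auto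
    thus "poly (smult (inverse (\<omega> ^ (1 + k * r) - \<omega> ^ (1 + j * r))) [:- (\<omega> ^ (1 + j * r)), 1:]) (\<omega> ^ (1 + m * r)) = 1"
      using True unfolding pl by (metis left_inverse)
  qed
  then show ?thesis using True by simp
next
  case False
  have "poly (eta l r \<omega> k) (\<omega> ^ (1 + m * r)) = 0"
    unfolding eta_def poly_prod
    by (rule prod_zero) (use False m in auto)
  then show ?thesis using False by simp
qed

end


lemma PAIR: "coeff (A * reflect_poly B) (degree B) = (\<Sum>i\<le>degree B. coeff A i * coeff B i)"
  unfolding coeff_mult by (intro sum.cong refl) (auto simp: coeff_reflect_poly)

lemma sumlt: "degree (B::'a::field poly) < s \<Longrightarrow> (\<Sum>i<s. coeff A i * coeff B i) = (\<Sum>i\<le>degree B. coeff A i * coeff B i)"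
  by (rule sum.mono_neutral_right) (auto simp: coeff_eq_0)

context
  fixes s :: nat and \<alpha> :: "'a::field" and p P' :: "'a poly"
  assumes s: "0 < s" and a: "\<alpha> \<noteq> 0" and pP: "p * P' = monom 1 s - [:\<alpha>:]"
begin

lemma pP_nz: "p \<noteq> 0" "P' \<noteq> 0"
  using pP X_nz[OF s, of \<alpha>] by auto

lemma pP_coeff0: "coeff p 0 \<noteq> 0" "coeff P' 0 \<noteq> 0"
proof -
  have "coeff (p * P') 0 = - \<alpha>" unfolding pP using s by (simp add: coeff_monom)
  hence "coeff p 0 * coeff P' 0 \<noteq> 0" using a by (simp add: coeff_mult)
  thus "coeff p 0 \<noteq> 0" "coeff P' 0 \<noteq> 0" by auto
qed

lemma pP_deg: "degree p + degree P' = s"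
  using degree_mult_eq[OF pP_nz] pP degree_X[OF s, of \<alpha>] by simp

lemma Q_deg: "degree (reflect_poly P') = degree P'"
  using pP_coeff0(2) by simp

lemma ORTH1:
  assumes g: "degree (g * p) < s" and h: "degree (h * reflect_poly P') < s"
  shows "(\<Sum>i<s. coeff (g * p) i * coeff (h * reflect_poly P') i) = 0"
proof (cases "g = 0 \<or> h = 0")
  case True
  then show ?thesis by auto
next
  case False
  hence g0: "g \<noteq> 0" and h0: "h \<noteq> 0" by auto
  let ?Q = "reflect_poly P'"
  let ?B = "h * ?Q"
  have Q0: "?Q \<noteq> 0" using pP_nz by simp
  have dB: "degree ?B = degree h + degree P'" using degree_mult_eq[OF h0 Q0] Q_deg by simp
  have dg: "degree g < degree P'" using g degree_mult_eq[OF g0 pP_nz(1)] pP_deg by simp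
  have "(\<Sum>i<s. coeff (g * p) i * coeff ?B i) = coeff (g * p * reflect_poly ?B) (degree ?B)"
    by (simp only: sumlt[OF h] PAIR)
  also have "g * p * reflect_poly ?B = (g * reflect_poly h) * (monom 1 s - [:\<alpha>:])"
    using pP_coeff0(2) by (simp add: reflect_poly_mult pP[symmetric] ac_simps)
  also have "coeff \<dots> (degree ?B) = 0"
  proof -
    let ?Z = "g * reflect_poly h"
    have "degree ?Z \<le> degree g + degree h"
      using degree_mult_le[of g "reflect_poly h"] degree_reflect_poly_le[of h] by linarith
    hence z: "coeff ?Z (degree ?B) = 0" using dB dg by (intro coeff_eq_0) linarith
    have "coeff (?Z * monom 1 s) (degree ?B) = 0"
      using h by (simp add: mult.commute[of ?Z] coeff_monom_mult)
    thus ?thesis using z by (simp add: algebra_simps)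
  qed
  finally show ?thesis .
qed

lemma CONV1:
  assumes E: "degree E < s"
    and orth: "\<And>g. degree (g * p) < s \<Longrightarrow> (\<Sum>i<s. coeff (g * p) i * coeff E i) = 0"
  shows "reflect_poly P' dvd E"
proof -
  let ?Q = "reflect_poly P'"
  have Q0: "?Q \<noteq> 0" using pP_nz by simp
  define h where "h = E div ?Q"
  define \<rho> where "\<rho> = E mod ?Q"
  have E_eq: "E = h * ?Q + \<rho>" unfolding h_def \<rho>_def by simp
  show ?thesis
  proof (cases "\<rho> = 0")
    case True
    then show ?thesis unfolding \<rho>_def by (simp add: dvd_eq_mod_eq_0)
  next
    case False
    have dr: "degree \<rho> < degree P'" using degree_mod_less[OF Q0, of E] False Q_deg unfolding \<rho>_def by auto
    have hQ: "degree (h * ?Q) < s"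
    proof -
      have "h * ?Q = E - \<rho>" using E_eq by simp
      moreover have "degree (E - \<rho>) < s"
        using degree_diff_le_max[of E \<rho>] E dr pP_deg by linarith
      ultimately show ?thesis by simp
    qed
    let ?n = "degree \<rho>"
    let ?g = "monom (1::'a) ?n"
    have dgp: "degree (?g * p) < s"
      using degree_mult_eq[OF _ pP_nz(1), of ?g] dr pP_deg by (simp add: degree_monom_eq)
    have "(\<Sum>i<s. coeff (?g * p) i * coeff \<rho> i) = (\<Sum>i<s. coeff (?g * p) i * coeff E i) - (\<Sum>i<s. coeff (?g * p) i * coeff (h * ?Q) i)"
      using E_eq by (simp add: algebra_simps sum_subtractf[symmetric] E_eq[symmetric])
    also have "\<dots> = 0" using orth[OF dgp] ORTH1[OF dgp hQ] by simp
    finally have z: "(\<Sum>i<s. coeff (?g * p) i * coeff \<rho> i) = 0" .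
    have "(\<Sum>i<s. coeff (?g * p) i * coeff \<rho> i) = coeff (?g * p) ?n * coeff \<rho> ?n"
    proof (rule sum.remove[THEN trans])
      show "finite {..<s}" by simp
      show "?n \<in> {..<s}" using dr pP_deg by simp
      have "(\<Sum>i\<in>{..<s} - {?n}. coeff (?g * p) i * coeff \<rho> i) = 0"
      proof (rule sum.neutral, intro ballI)
        fix i assume "i \<in> {..<s} - {?n}"
        hence "i < ?n \<or> i > ?n" by auto
        thus "coeff (?g * p) i * coeff \<rho> i = 0"
          by (auto simp: coeff_monom_mult coeff_eq_0)
      qed
      thus "coeff (?g * p) ?n * coeff \<rho> ?n + (\<Sum>i\<in>{..<s} - {?n}. coeff (?g * p) i * coeff \<rho> i) = coeff (?g * p) ?n * coeff \<rho> ?n"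
        by simp
    qed
    also have "\<dots> \<noteq> 0" using pP_coeff0(1) False by (simp add: coeff_monom_mult)
    finally show ?thesis using z by simp
  qed
qed

end


lemma R_emb_carrier: "R_emb s l \<alpha> \<beta> f g \<in> R_carrier s l"
  by (auto simp: R_emb_def R_carrier_def)

lemma R_mul_carrier: "R_mul s l \<alpha> \<beta> c d \<in> R_carrier s l"
  by (auto simp: R_mul_def R_carrier_def)

lemma R_add_carrier: "c \<in> R_carrier s l \<Longrightarrow> d \<in> R_carrier s l \<Longrightarrow> R_add c d \<in> R_carrier s l"
  by (auto simp: R_add_def R_carrier_def)

lemma R_zero_carrier: "R_zero \<in> R_carrier s l"
  by (auto simp: R_zero_def R_carrier_def)

lemma lin_comb_carrier: "(\<And>k. k \<in> A \<Longrightarrow> B k \<in> R_carrier s l) \<Longrightarrow> lin_comb A u B \<in> R_carrier s l"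
  by (auto simp: lin_comb_def R_carrier_def intro!: sum.neutral)

lemma lin_comb_empty: "lin_comb {} u B = R_zero"
  by (simp add: lin_comb_def R_zero_def)

lemma lin_comb_insert: "finite F \<Longrightarrow> z \<notin> F \<Longrightarrow> lin_comb (insert z F) u B = R_add (R_smult (u z) (B z)) (lin_comb F u B)"
  by (simp add: lin_comb_def R_add_def R_smult_def)

lemma reflect_X:
  assumes s: "0 < s" and a: "\<alpha> * \<alpha> = (1::'a::field)"
  shows "reflect_poly (monom 1 s - [:\<alpha>:]) = smult (- \<alpha>) (monom 1 s - [:\<alpha>:])"
proof (rule poly_eqI)
  fix n
  have d: "degree (monom (1::'a) s - [:\<alpha>:]) = s" by (rule degree_X[OF s])
  have c: "coeff (monom (1::'a) s - [:\<alpha>:]) m = (if m = s then 1 else 0) - (if m = 0 then \<alpha> else 0)" for m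
    by (cases m) (auto simp: coeff_monom)
  show "coeff (reflect_poly (monom 1 s - [:\<alpha>:])) n = coeff (smult (- \<alpha>) (monom 1 s - [:\<alpha>:])) n"
    unfolding coeff_reflect_poly d coeff_smult c using s a by auto
qed

lemma Q_dvd_X:
  assumes s: "0 < s" and a: "\<alpha> * \<alpha> = (1::'a::field)" and pP: "p * P' = monom 1 s - [:\<alpha>:]"
  shows "reflect_poly P' dvd (monom 1 s - [:\<alpha>:])"
proof -
  have "reflect_poly p * reflect_poly P' = smult (- \<alpha>) (monom 1 s - [:\<alpha>:])"
    using reflect_X[OF s a] pP by (simp add: reflect_poly_mult[symmetric])
  hence "smult (- \<alpha>) (reflect_poly p * reflect_poly P') = (monom 1 s - [:\<alpha>:])"
    using a by simp
  thus ?thesis by (metis dvd_smult dvd_triv_right)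
qed

lemma mod_X_small: "0 < s \<Longrightarrow> degree f < s \<Longrightarrow> f mod (monom 1 s - [:\<alpha>:]) = (f::'a::field poly)"
  by (rule mod_poly_less) (simp add: degree_X)


theorem theorem3:
  fixes s l r :: nat and \<alpha> \<beta> \<omega> :: "'a::{field,finite}"
    and C :: "(nat \<Rightarrow> nat \<Rightarrow> 'a) set"
    and p p' :: "nat \<Rightarrow> 'a poly"
  assumes "0 < s" and "0 < l"
    and "\<alpha> \<in> {1, -1}" and "\<beta> \<in> {1, -1}"
    and r_def: "r = mult_order \<beta>"
    and "card (UNIV :: 'a set) mod (r * l) = 1 mod (r * l)"
    and "primitive_root (r * l) \<omega>" and "\<omega> ^ l = \<beta>"
    and "R_ideal s l \<alpha> \<beta> C"
    and p_monic: "\<And>j. j < l \<Longrightarrow> lead_coeff (p j) = 1"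
    and p_dvd: "\<And>j. j < l \<Longrightarrow> p j dvd (monom 1 s - [:\<alpha>:])"
    and p_gen: "\<And>j. j < l \<Longrightarrow>
       {f. degree f < s \<and> R_emb s l \<alpha> \<beta> f (eta l r \<omega> j) \<in> C}
         = {(g * p j) mod (monom 1 s - [:\<alpha>:]) | g. True}"
    and p'_def: "\<And>j. j < l \<Longrightarrow> p j * p' j = monom 1 s - [:\<alpha>:]"
  shows "R_dual s l C = R_gen_ideal s l \<alpha> \<beta>
           {R_emb s l \<alpha> \<beta> (reflect_poly (p' j)) (reflect_poly (eta l r \<omega> j)) | j. j < l}
       \<and> fam_indep {(j, i). j < l \<and> i < degree (p j)}
           (\<lambda>(j, i). R_emb s l \<alpha> \<beta> (monom 1 i * reflect_poly (p' j)) (reflect_poly (eta l r \<omega> j)))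
       \<and> fam_span {(j, i). j < l \<and> i < degree (p j)}
           (\<lambda>(j, i). R_emb s l \<alpha> \<beta> (monom 1 i * reflect_poly (p' j)) (reflect_poly (eta l r \<omega> j)))
         = R_dual s l C"

proof -
  note s = assms(1) and l = assms(2)
  let ?X = "monom 1 s - [:\<alpha>:] :: 'a poly"
  define \<rho> where "\<rho> m = \<omega> ^ (1 + m * r)" for m
  define \<nu> where "\<nu> m = inverse (\<rho> m)" for m
  define L where "L = (of_nat l :: 'a)"
  define Q where "Q k = reflect_poly (p' k)" for k
  define A where "A = {(j, i). j < l \<and> i < degree (p j)}"
  define Bf where "Bf = (\<lambda>(j, i). R_emb s l \<alpha> \<beta> (monom 1 i * reflect_poly (p' j)) (reflect_poly (eta l r \<omega> j)))"
  define G where "G = {R_emb s l \<alpha> \<beta> (reflect_poly (p' j)) (reflect_poly (eta l r \<omega> j)) | j. j < l}"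
  define D where "D = R_dual s l C"
  define lam where "lam m = \<nu> m ^ degree (eta l r \<omega> m)" for m
  have aa: "\<alpha> * \<alpha> = 1" using sq1 assms(3) by blast
  have a0: "\<alpha> \<noteq> 0" using aa by auto
  have bb: "\<beta> * \<beta> = 1" using sq1 assms(4) by blast
  have r: "0 < r" using mult_order_pos[OF assms(4)] r_def by simp
  note prim = assms(7) and wl = assms(8)
  have rho_l: "\<rho> m ^ l = \<beta>" for m unfolding \<rho>_def by (rule rho_pow[OF l r prim wl])
  have rho0: "\<rho> m \<noteq> 0" for m unfolding \<rho>_def using w_nz[OF l r prim wl] by simp
  have binv: "inverse \<beta> = \<beta>" using bb by (metis inverse_unique)
  have nu_l: "\<nu> m ^ l = \<beta>" for m unfolding \<nu>_def by (simp add: power_inverse rho_l binv)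
  have nu0: "\<nu> m \<noteq> 0" for m unfolding \<nu>_def using rho0 by simp
  have inv_nu: "inverse (\<nu> m) = \<rho> m" for m unfolding \<nu>_def by simp
  have o1: "O2 l \<rho> \<nu> L" unfolding \<rho>_def \<nu>_def L_def by (rule O2_rho[OF l r prim wl])
  have o2: "O2 l \<nu> \<rho> L" by (rule O2_swap[OF l r prim wl o1])
  have L0: "L \<noteq> 0"
  proof
    assume L: "L = 0"
    have rl: "0 < r * l" using r l by simp
    show False
    proof (cases "r * l = 1")
      case True
      hence "l = 1" by simp
      thus False using L by (simp add: L_def)
    next
      case False
      hence m1: "1 mod (r * l) = 1" using rl by simp
      have cn: "card (UNIV::'a set) = r * l * (card (UNIV::'a set) div (r * l)) + 1"
        using mult_div_mod_eq[of "r * l" "card (UNIV::'a set)"] assms(6) m1 by simp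
      have "(0::'a) = of_nat (card (UNIV::'a set))" using of_nat_card_0 by metis
      also have "\<dots> = of_nat r * L * of_nat (card (UNIV::'a set) div (r * l)) + 1"
        by (subst cn) (simp add: L_def)
      also have "\<dots> = 1" using L by simp
      finally show False by simp
    qed
  qed
  have eta_ev: "poly (eta l r \<omega> k) (\<rho> m) = (if k = m then 1 else 0)" if "k < l" "m < l" for k m
    unfolding \<rho>_def by (rule eta_eval[OF l r prim wl that])
  have pP: "p k * p' k = ?X" if "k < l" for k using p'_def that by simp
  have degp: "degree (p k) + degree (p' k) = s" if "k < l" for k by (rule pP_deg[OF s a0 pP[OF that]])
  have degQ: "degree (Q k) = degree (p' k)" if "k < l" for k unfolding Q_def by (rule Q_deg[OF s a0 pP[OF that]])
  have Q0: "Q k \<noteq> 0" if "k < l" for k unfolding Q_def using pP_nz[OF s a0 pP[OF that]] by simp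
  have QX: "Q k dvd ?X" if "k < l" for k unfolding Q_def by (rule Q_dvd_X[OF s aa pP[OF that]])
  have pX: "p k dvd ?X" if "k < l" for k using pP[OF that] by (metis dvd_triv_left)
  have Csub: "C \<subseteq> R_carrier s l" and Cmul: "\<And>c x. c \<in> C \<Longrightarrow> x \<in> R_carrier s l \<Longrightarrow> R_mul s l \<alpha> \<beta> x c \<in> C"
    using assms(9) unfolding R_ideal_def by auto
  have evemb: "ev s l (R_emb s l \<alpha> \<beta> f g) v = (f * [:poly g v:]) mod ?X" if "v ^ l = \<beta>" for f g v
    by (rule ev_emb[OF s l that])
  have evmul: "ev s l (R_mul s l \<alpha> \<beta> c d) v = (ev s l c v * ev s l d v) mod ?X" if "v ^ l = \<beta>" for c d v
    by (rule ev_mul[OF s l that])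
  have small: "f mod ?X = f" if "degree f < s" for f by (rule mod_X_small[OF s that])
  have degev: "degree (ev s l c v) < s" for c v by (rule degree_ev[OF s])

  have stepA: "p m dvd ev s l c (\<rho> m)" if c: "c \<in> C" and m: "m < l" for c m
  proof -
    let ?e = "R_emb s l \<alpha> \<beta> 1 (eta l r \<omega> m)"
    have cc: "c \<in> R_carrier s l" using c Csub by auto
    have "R_mul s l \<alpha> \<beta> ?e c = R_emb s l \<alpha> \<beta> (ev s l c (\<rho> m)) (eta l r \<omega> m)"
    proof (rule INJ[OF R_mul_carrier R_emb_carrier o1 L0])
      fix k assume k: "k < l"
      have dsm: "degree (smult x (ev s l c (\<rho> k))) < s" for x
        using degree_smult_le[of x "ev s l c (\<rho> k)"] degev[of c "\<rho> k"] by linarith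
      have c1: "[:x:] mod ?X = [:x:]" for x by (rule small) (simp add: s)
      show "ev s l (R_mul s l \<alpha> \<beta> ?e c) (\<rho> k) = ev s l (R_emb s l \<alpha> \<beta> (ev s l c (\<rho> m)) (eta l r \<omega> m)) (\<rho> k)"
        unfolding evmul[OF rho_l] evemb[OF rho_l] eta_ev[OF m k]
        using small[OF dsm] c1 by (cases "m = k") simp_all
    qed
    moreover have "R_mul s l \<alpha> \<beta> ?e c \<in> C" by (rule Cmul[OF c R_emb_carrier])
    ultimately have "ev s l c (\<rho> m) \<in> {f. degree f < s \<and> R_emb s l \<alpha> \<beta> f (eta l r \<omega> m) \<in> C}"
      using degev by simp
    then obtain g where "ev s l c (\<rho> m) = (g * p m) mod ?X" using p_gen[OF m] by blast
    thus ?thesis using pX[OF m] by (metis dvd_mod dvd_triv_right)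
  qed

  have CHAR: "d \<in> D \<longleftrightarrow> d \<in> R_carrier s l \<and> (\<forall>k<l. Q k dvd ev s l d (\<nu> k))" for d
  proof
    assume dD: "d \<in> D"
    hence dc: "d \<in> R_carrier s l" and dort: "\<And>c. c \<in> C \<Longrightarrow> (\<Sum>i<s. \<Sum>j<l. c i j * d i j) = 0"
      unfolding D_def R_dual_def by auto
    have "Q k dvd ev s l d (\<nu> k)" if k: "k < l" for k
      unfolding Q_def
    proof (rule CONV1[OF s a0 pP[OF k] degev])
      fix g assume dg: "degree (g * p k) < s"
      let ?c = "R_emb s l \<alpha> \<beta> (g * p k) (eta l r \<omega> k)"
      have "g * p k \<in> {(g * p k) mod ?X | g. True}" using small[OF dg] by (metis (mono_tags, lifting) mem_Collect_eq)
      hence "?c \<in> C" using p_gen[OF k] by blast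
      hence z: "(\<Sum>i<s. \<Sum>j<l. ?c i j * d i j) = 0" by (rule dort)
      have evc: "ev s l ?c (\<rho> m) = (if k = m then g * p k else 0)" if m: "m < l" for m
        unfolding evemb[OF rho_l] eta_ev[OF k m] using small[OF dg] by (cases "k = m") simp_all
      have "(\<Sum>m<l. \<Sum>i<s. coeff (ev s l ?c (\<rho> m)) i * coeff (ev s l d (\<nu> m)) i)
          = (\<Sum>m<l. if k = m then (\<Sum>i<s. coeff (g * p k) i * coeff (ev s l d (\<nu> k)) i) else 0)"
        by (intro sum.cong refl) (simp add: evc)
      also have "\<dots> = (\<Sum>i<s. coeff (g * p k) i * coeff (ev s l d (\<nu> k)) i)"
        using k by (simp add: sum.delta)
      finally show "(\<Sum>i<s. coeff (g * p k) i * coeff (ev s l d (\<nu> k)) i) = 0"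
        using z INNER[OF R_emb_carrier dc o1 L0, of \<alpha> \<beta> "g * p k" "eta l r \<omega> k"] L0 by simp
    qed
    thus "d \<in> R_carrier s l \<and> (\<forall>k<l. Q k dvd ev s l d (\<nu> k))" using dc by blast
  next
    assume "d \<in> R_carrier s l \<and> (\<forall>k<l. Q k dvd ev s l d (\<nu> k))"
    hence dc: "d \<in> R_carrier s l" and dq: "\<And>k. k < l \<Longrightarrow> Q k dvd ev s l d (\<nu> k)" by auto
    have "(\<Sum>i<s. \<Sum>j<l. c i j * d i j) = 0" if c: "c \<in> C" for c
    proof -
      have cc: "c \<in> R_carrier s l" using c Csub by auto
      have "(\<Sum>i<s. coeff (ev s l c (\<rho> m)) i * coeff (ev s l d (\<nu> m)) i) = 0" if m: "m < l" for m
      proof -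
        obtain g where g: "ev s l c (\<rho> m) = g * p m" using stepA[OF c m] by (metis dvd_def mult.commute)
        obtain h where h: "ev s l d (\<nu> m) = h * reflect_poly (p' m)" using dq[OF m] unfolding Q_def
          by (metis dvd_def mult.commute)
        show ?thesis unfolding g h
          by (rule ORTH1[OF s a0 pP[OF m]]) (use degev[of c "\<rho> m"] degev[of d "\<nu> m"] g h in simp_all)
      qed
      thus ?thesis using INNER[OF cc dc o1 L0] by simp
    qed
    thus "d \<in> D" using dc unfolding D_def R_dual_def by auto
  qed

  have monom1: "monom c n = smult c (monom 1 n)" for c :: 'a and n by (simp add: smult_monom)
  have lam0: "lam m \<noteq> 0" for m unfolding lam_def using nu0 by simp
  have reta: "poly (reflect_poly (eta l r \<omega> k)) (\<nu> m) = (if k = m then lam m else 0)" if "k < l" "m < l" for k m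
    unfolding poly_reflect_poly_nz[OF nu0] inv_nu eta_ev[OF that] lam_def by simp
  have degmQ: "degree (monom 1 t * Q k) = t + degree (p' k)" if "k < l" for k t
    using degree_mult_eq[of "monom (1::'a) t" "Q k"] Q0[OF that] degQ[OF that] by (simp add: degree_monom_eq)
  have evB: "ev s l (Bf (k, t)) (\<nu> m) = (if k = m then smult (lam m) (monom 1 t * Q k) else 0)"
    if k: "k < l" and t: "t < degree (p k)" and m: "m < l" for k t m
  proof -
    have "degree (monom 1 t * Q k) < s" using degmQ[OF k, of t] degp[OF k] t by simp
    hence sm: "(monom 1 t * Q k) mod ?X = monom 1 t * Q k" by (rule small)
    show ?thesis unfolding Bf_def using sm
      by (simp add: evemb[OF nu_l] reta[OF k m] Q_def[symmetric] mod_smult_left)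
  qed
  have finA: "finite A"
  proof (rule finite_subset)
    show "A \<subseteq> {..<l} \<times> {..<s}" unfolding A_def using degp by fastforce
  qed simp
  have Bc: "Bf z \<in> R_carrier s l" for z unfolding Bf_def by (cases z) (simp add: R_emb_carrier)
  have hp: "ev s l (lin_comb A u Bf) (\<nu> m) = smult (lam m) ((\<Sum>t<degree (p m). monom (u (m, t)) t) * Q m)"
    if m: "m < l" for u m
  proof -
    have "ev s l (lin_comb A u Bf) (\<nu> m) = (\<Sum>z\<in>A. smult (u z) (ev s l (Bf z) (\<nu> m)))"
      by (rule ev_lin_comb)
    also have "\<dots> = (\<Sum>z\<in>A. if fst z = m then smult (lam m) (monom (u (m, snd z)) (snd z) * Q m) else 0)"
    proof (intro sum.cong refl)
      fix z assume "z \<in> A"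
      then obtain k t where z: "z = (k, t)" and k: "k < l" and t: "t < degree (p k)" unfolding A_def by auto
      show "smult (u z) (ev s l (Bf z) (\<nu> m)) = (if fst z = m then smult (lam m) (monom (u (m, snd z)) (snd z) * Q m) else 0)"
        unfolding z using evB[OF k t m] monom1[of "u (m, t)" t] by (simp add: ac_simps)
    qed
    also have "\<dots> = (\<Sum>z\<in>Pair m ` {..<degree (p m)}. if fst z = m then smult (lam m) (monom (u (m, snd z)) (snd z) * Q m) else 0)"
      by (rule sum.mono_neutral_right[OF finA]) (auto simp: A_def m)
    also have "\<dots> = (\<Sum>t<degree (p m). smult (lam m) (monom (u (m, t)) t * Q m))"
      by (subst sum.reindex) (auto simp: inj_on_def)
    also have "\<dots> = smult (lam m) ((\<Sum>t<degree (p m). monom (u (m, t)) t) * Q m)"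
      by (simp add: sum_distrib_right smult_sum_right)
    finally show ?thesis .
  qed
  have coeffH: "coeff (\<Sum>t<a. monom (u (m, t)) t) n = (if n < a then u (m, n) else 0)" for a u m n
    by (simp add: coeff_sum coeff_monom)

  have indep: "fam_indep A Bf"
    unfolding fam_indep_def
  proof (intro allI impI ballI)
    fix u z assume z0: "lin_comb A u Bf = R_zero" and z: "z \<in> A"
    then obtain m t where zz: "z = (m, t)" and m: "m < l" and t: "t < degree (p m)" unfolding A_def by auto
    have "smult (lam m) ((\<Sum>t<degree (p m). monom (u (m, t)) t) * Q m) = 0"
      using hp[OF m, of u] z0 ev_zero[of s l "\<nu> m"] by simp
    hence "(\<Sum>t<degree (p m). monom (u (m, t)) t) = 0" using lam0[of m] Q0[OF m] by simp
    hence "coeff (\<Sum>t<degree (p m). monom (u (m, t)) t) t = 0" by simp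
    thus "u z = 0" using t zz by (simp add: coeffH)
  qed

  have span_sub: "fam_span A Bf \<subseteq> D"
  proof
    fix x assume "x \<in> fam_span A Bf"
    then obtain u where x: "x = lin_comb A u Bf" unfolding fam_span_def by auto
    have "x \<in> R_carrier s l" unfolding x by (rule lin_comb_carrier[OF Bc])
    moreover have "Q k dvd ev s l x (\<nu> k)" if k: "k < l" for k
      unfolding x hp[OF k] by (intro dvd_smult dvd_triv_right)
    ultimately show "x \<in> D" using CHAR by blast
  qed
  have span_sup: "D \<subseteq> fam_span A Bf"
  proof
    fix d assume dD: "d \<in> D"
    hence dc: "d \<in> R_carrier s l" and dq: "\<And>k. k < l \<Longrightarrow> Q k dvd ev s l d (\<nu> k)" using CHAR by auto
    have "\<forall>m. \<exists>h. m < l \<longrightarrow> ev s l d (\<nu> m) = h * Q m"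
      using dq by (metis dvd_def mult.commute)
    then obtain H where H: "\<And>m. m < l \<Longrightarrow> ev s l d (\<nu> m) = H m * Q m" by metis
    have Hc: "coeff (H m) n = 0" if m: "m < l" and n: "degree (p m) \<le> n" for m n
    proof (cases "H m = 0")
      case False
      have "degree (H m * Q m) < s" using degev H[OF m] by metis
      hence "degree (H m) < degree (p m)"
        using degree_mult_eq[OF False Q0[OF m]] degQ[OF m] degp[OF m] by simp
      thus ?thesis using n by (intro coeff_eq_0) simp
    qed simp
    define u where "u z = coeff (H (fst z)) (snd z) / lam (fst z)" for z
    have "lin_comb A u Bf = d"
    proof (rule INJ[OF lin_comb_carrier[OF Bc] dc o2 L0])
      fix m assume m: "m < l"
      have "(\<Sum>t<degree (p m). monom (u (m, t)) t) = smult (inverse (lam m)) (H m)"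
        by (rule poly_eqI, unfold coeffH) (auto simp: u_def Hc[OF m] field_simps)
      thus "ev s l (lin_comb A u Bf) (\<nu> m) = ev s l d (\<nu> m)"
        unfolding hp[OF m] H[OF m] using lam0[of m] by simp
    qed
    thus "d \<in> fam_span A Bf" unfolding fam_span_def by blast
  qed

  have Dideal: "R_ideal s l \<alpha> \<beta> D"
    unfolding R_ideal_def
  proof (intro conjI ballI)
    show "D \<subseteq> R_carrier s l" using CHAR by blast
    show "R_zero \<in> D" using CHAR by (simp add: R_zero_carrier ev_zero)
  next
    fix c d :: "nat \<Rightarrow> nat \<Rightarrow> 'a" assume c: "c \<in> D" and d: "d \<in> D"
    show "R_add c d \<in> D" using c d CHAR by (simp add: R_add_carrier ev_add)
  next
    fix c x :: "nat \<Rightarrow> nat \<Rightarrow> 'a" assume c: "c \<in> D" and x: "x \<in> R_carrier s l"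
    have "Q k dvd ev s l (R_mul s l \<alpha> \<beta> x c) (\<nu> k)" if k: "k < l" for k
      unfolding evmul[OF nu_l] using c CHAR k QX[OF k] by (intro dvd_mod dvd_mult) auto
    thus "R_mul s l \<alpha> \<beta> x c \<in> D" using CHAR R_mul_carrier by blast
  qed
  have GD: "G \<subseteq> D"
  proof
    fix x assume "x \<in> G"
    then obtain j where j: "j < l" and x: "x = R_emb s l \<alpha> \<beta> (Q j) (reflect_poly (eta l r \<omega> j))"
      unfolding G_def Q_def by auto
    have "Q k dvd ev s l x (\<nu> k)" if k: "k < l" for k
      unfolding x evemb[OF nu_l] reta[OF j k] using QX[OF k]
      by (cases "j = k") (auto intro!: dvd_mod dvd_smult)
    thus "x \<in> D" unfolding x using CHAR R_emb_carrier by blast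
  qed
  have gen_sub: "R_gen_ideal s l \<alpha> \<beta> G \<subseteq> D"
    unfolding R_gen_ideal_def using Dideal GD by (intro Inter_lower) simp
  have gen_sup: "D \<subseteq> R_gen_ideal s l \<alpha> \<beta> G"
  proof
    fix d assume "d \<in> D"
    then obtain u where d: "d = lin_comb A u Bf" using span_sup unfolding fam_span_def by auto
    show "d \<in> R_gen_ideal s l \<alpha> \<beta> G"
      unfolding R_gen_ideal_def
    proof (rule InterI)
      fix I assume "I \<in> {I. R_ideal s l \<alpha> \<beta> I \<and> G \<subseteq> I}"
      hence Ii: "R_ideal s l \<alpha> \<beta> I" and GI: "G \<subseteq> I" by auto
      have Ic: "I \<subseteq> R_carrier s l" and I0: "R_zero \<in> I" and Iadd: "\<And>x y. x \<in> I \<Longrightarrow> y \<in> I \<Longrightarrow> R_add x y \<in> I"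
        and Imul: "\<And>x y. x \<in> I \<Longrightarrow> y \<in> R_carrier s l \<Longrightarrow> R_mul s l \<alpha> \<beta> y x \<in> I"
        using Ii unfolding R_ideal_def by auto
      have c1: "[:x:] mod ?X = [:x:]" for x by (rule small) (simp add: s)
      have Ism: "R_smult a x \<in> I" if x: "x \<in> I" for a x
      proof -
        have xc: "x \<in> R_carrier s l" using x Ic by auto
        have dsm: "degree (smult a (ev s l x (\<rho> k))) < s" for k
          using degree_smult_le[of a "ev s l x (\<rho> k)"] degev[of x "\<rho> k"] by linarith
        have "R_mul s l \<alpha> \<beta> (R_emb s l \<alpha> \<beta> [:a:] 1) x = R_smult a x"
        proof (rule INJ[OF R_mul_carrier _ o1 L0])
          show "R_smult a x \<in> R_carrier s l" using xc by (auto simp: R_smult_def R_carrier_def)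
          fix k assume k: "k < l"
          show "ev s l (R_mul s l \<alpha> \<beta> (R_emb s l \<alpha> \<beta> [:a:] 1) x) (\<rho> k) = ev s l (R_smult a x) (\<rho> k)"
            unfolding evmul[OF rho_l] evemb[OF rho_l] ev_smult using c1 small[OF dsm] by simp
        qed
        thus ?thesis using Imul[OF x R_emb_carrier[of s l \<alpha> \<beta> "[:a:]" 1]] by simp
      qed
      have IB: "Bf z \<in> I" if z: "z \<in> A" for z
      proof -
        obtain k t where zz: "z = (k, t)" and k: "k < l" using z unfolding A_def by auto
        have g: "R_emb s l \<alpha> \<beta> (reflect_poly (p' k)) (reflect_poly (eta l r \<omega> k)) \<in> I"
          using GI k unfolding G_def by blast
        have "R_mul s l \<alpha> \<beta> (R_emb s l \<alpha> \<beta> (monom 1 t) 1) (R_emb s l \<alpha> \<beta> (reflect_poly (p' k)) (reflect_poly (eta l r \<omega> k))) = Bf z"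
        proof (rule INJ[OF R_mul_carrier _ o1 L0])
          show "Bf z \<in> R_carrier s l" by (rule Bc)
          fix m assume m: "m < l"
          show "ev s l (R_mul s l \<alpha> \<beta> (R_emb s l \<alpha> \<beta> (monom 1 t) 1) (R_emb s l \<alpha> \<beta> (reflect_poly (p' k)) (reflect_poly (eta l r \<omega> k)))) (\<rho> m) = ev s l (Bf z) (\<rho> m)"
            by (simp add: zz Bf_def evmul[OF rho_l] evemb[OF rho_l] mod_mult_eq ac_simps)
        qed
        thus ?thesis using Imul[OF g R_emb_carrier[of s l \<alpha> \<beta> "monom 1 t" 1]] by simp
      qed
      have "lin_comb A' u Bf \<in> I" if "A' \<subseteq> A" for A'
      proof -
        have "finite A'" using that finA by (rule finite_subset)
        thus ?thesis using that
        proof (induction A' rule: finite_induct)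
          case empty
          then show ?case using I0 by (simp add: lin_comb_empty)
        next
          case (insert z F)
          then show ?case by (simp add: lin_comb_insert Iadd Ism IB)
        qed
      qed
      thus "d \<in> I" unfolding d by simp
    qed
  qed
  have main: "D = R_gen_ideal s l \<alpha> \<beta> G \<and> fam_indep A Bf \<and> fam_span A Bf = D"
    using gen_sub gen_sup indep span_sub span_sup by blast
  show ?thesis using main unfolding D_def G_def A_def Bf_def .

qed

end
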